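(* Let $p$ be an odd prime, $k\in\mathbb N$, and $n=p^a m$ with $a\in\mathbb N_0$, $m\in\mathbb N$, $p\nmid m$. Then for every $\varepsilon>0$, \[ \left|\sum_{d\mid n}\left(\frac dp\right)d^k\right|\gg_\varepsilon m^{k-\varepsilon}, \qquad \operatorname{sgn}\left(\sum_{d\mid n}\left(\frac dp\right)d^k\right)=\left(\frac mp\right). \]
   Context: $\left(\frac{\cdot}{p}\right)$ is the Legendre symbol; sums are over positive divisors; $\gg_\varepsilon$ means the inequality $\ge c_\varepsilon m^{k-\varepsilon}$ holds with a constant $c_\varepsilon>0$ depending only on $\varepsilon$. *)

theory Defs
  imports "HOL-Number_Theory.Number_Theory"
begin

end

theory Submission
  imports Defs
begin


lemma Legendre_vals: "Legendre a p \<in> {-1,0,1}"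
  by (simp add: Legendre_def)

lemma Legendre_mult:
  assumes "prime p" "2 < p"
  shows "Legendre (a*b) (int p) = Legendre a (int p) * Legendre b (int p)"
proof -
  let ?h = "(p - 1) div 2"
  have 1: "[Legendre (a*b) (int p) = (a*b) ^ ?h] (mod int p)" using euler_criterion assms by blast
  have 2: "[Legendre a (int p) * Legendre b (int p) = a ^ ?h * b ^ ?h] (mod int p)"
    using euler_criterion[OF assms, of a] euler_criterion[OF assms, of b] cong_mult by blast
  have "[Legendre (a*b) (int p) = Legendre a (int p) * Legendre b (int p)] (mod int p)"
    using 1 2 by (metis cong_sym cong_trans power_mult_distrib)
  then have d: "int p dvd Legendre (a*b) (int p) - Legendre a (int p) * Legendre b (int p)"
    using cong_iff_dvd_diff by blast
  have "\<bar>Legendre (a*b) (int p) - Legendre a (int p) * Legendre b (int p)\<bar> \<le> 2"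
    using Legendre_vals[of "a*b" "int p"] Legendre_vals[of a "int p"] Legendre_vals[of b "int p"] by auto
  then show ?thesis using dvd_imp_le_int[OF _ d] assms(2) by fastforce
qed

lemma Legendre_one: "prime p \<Longrightarrow> Legendre 1 (int p) = 1"
proof -
  assume p: "prime p"
  have "\<not> [1 = 0] (mod int p)" using p
    by (auto simp: cong_0_iff prime_gt_1_nat)
  moreover have "QuadRes (int p) 1" unfolding QuadRes_def by (rule exI[of _ 1]) simp
  ultimately show ?thesis by (simp add: Legendre_def)
qed

lemma Legendre_pow:
  assumes "prime p" "2 < p"
  shows "Legendre (a^n) (int p) = Legendre a (int p) ^ n"
  by (induction n) (simp_all add: Legendre_one[OF assms(1)] Legendre_mult[OF assms])

lemma Legendre_zero_iff: "Legendre a (int p) = 0 \<longleftrightarrow> int p dvd a"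
  by (simp add: Legendre_def cong_0_iff)

lemma divsum_mult:
  fixes a b :: nat
  assumes "coprime a b" "a > 0" "b > 0"
  shows "(\<Sum>d | d dvd a*b. f d) = (\<Sum>d1 | d1 dvd a. \<Sum>d2 | d2 dvd b. f (d1*d2))"
proof -
  have inj: "inj_on (\<lambda>(x,y). x*y) ({d. d dvd a} \<times> {d. d dvd b})"
  proof (rule inj_onI, clarify)
    fix x1 y1 x2 y2 assume h: "x1 dvd a" "y1 dvd b" "x2 dvd a" "y2 dvd b" "x1*y1 = x2*y2"
    have c12: "coprime x1 y2" by (rule coprime_divisors[OF h(1) h(4) assms(1)])
    have c21: "coprime x2 y1" by (rule coprime_divisors[OF h(3) h(2) assms(1)])
    have "x1 dvd x2 * y2" using h(5) by (metis dvd_triv_left)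
    then have d1: "x1 dvd x2" using coprime_dvd_mult_left_iff[OF c12] by blast
    have "x2 dvd x1 * y1" using h(5) by (metis dvd_triv_left)
    then have d2: "x2 dvd x1" using coprime_dvd_mult_left_iff[OF c21] by blast
    have x: "x1 = x2" using d1 d2 by (rule dvd_antisym)
    have "x1 > 0" using h(1) assms(2) by (cases "x1 = 0") simp_all
    then have "y1 = y2" using h(5) x by simp
    then show "x1 = x2 \<and> y1 = y2" using x by simp
  qed
  have img: "(\<lambda>(x,y). x*y) ` ({d. d dvd a} \<times> {d. d dvd b}) = {d. d dvd a*b}"
  proof
    show "(\<lambda>(x,y). x*y) ` ({d. d dvd a} \<times> {d. d dvd b}) \<subseteq> {d. d dvd a*b}"
      by (auto intro: mult_dvd_mono)
    show "{d. d dvd a*b} \<subseteq> (\<lambda>(x,y). x*y) ` ({d. d dvd a} \<times> {d. d dvd b})"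
    proof
      fix d assume "d \<in> {d. d dvd a*b}"
      then obtain x y where "d = x*y" "x dvd a" "y dvd b" by (auto elim: dvd_productE)
      then show "d \<in> (\<lambda>(x,y). x*y) ` ({d. d dvd a} \<times> {d. d dvd b})" by force
    qed
  qed
  have "(\<Sum>d | d dvd a*b. f d) = (\<Sum>z\<in>{d. d dvd a} \<times> {d. d dvd b}. f (fst z * snd z))"
    using sum.reindex[OF inj, of f] img by (simp add: case_prod_beta')
  also have "\<dots> = (\<Sum>d1 | d1 dvd a. \<Sum>d2 | d2 dvd b. f (d1*d2))"
    unfolding sum.cartesian_product by (simp add: case_prod_beta')
  finally show ?thesis .
qed

lemma geom_bound:
  fixes Q s :: int and e :: nat
  assumes "Q \<ge> 2" "s = 1 \<or> s = -1"
  shows "sgn (\<Sum>i\<le>e. (s*Q)^i) = s^e \<and> Q^e \<le> 3 * \<bar>\<Sum>i\<le>e. (s*Q)^i\<bar>"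
  using assms(2)
proof
  assume s: "s = 1"
  have nn: "\<And>i. i \<in> {..e} \<Longrightarrow> 0 \<le> Q^i" using assms(1) by simp
  have "Q^e \<le> (\<Sum>i\<le>e. Q^i)" using member_le_sum[of e "{..e}" "\<lambda>i. Q^i"] nn by auto
  moreover have "Q^e > 0" using assms(1) by simp
  ultimately show ?thesis using s by auto
next
  assume s: "s = -1"
  have cf: "(1+Q) * (\<Sum>i\<le>n. (-Q)^i) = 1 - (-Q)^(n+1)" for n
    by (induction n) (simp_all add: algebra_simps)
  define G where "G = (\<Sum>i\<le>e. (-Q)^i)"
  define H where "H = (-1)^e * G"
  have "(1+Q) * H = (-1)^e * ((1+Q) * G)" unfolding H_def by (simp add: algebra_simps)
  also have "\<dots> = (-1)^e * (1 - (-Q)^(e+1))" using cf[of e] unfolding G_def by simp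
  also have "\<dots> = (-1)^e - ((-1)^e * (-1)^(e+1)) * Q^(e+1)"
    unfolding power_minus[of Q "e+1"] by (simp add: algebra_simps)
  also have "(-1::int)^e * (-1)^(e+1) = -1"
    by (cases "even e") simp_all
  finally have HQ: "(1+Q) * H = (-1)^e + Q^(e+1)" by simp
  have pe: "(-1::int)^e \<ge> -1" by (cases "even e") simp_all
  have Qe: "Q^e \<ge> 1" using assms(1) by simp
  have Qe1: "Q^(e+1) \<ge> 2 * Q^e" using assms(1) Qe by simp
  have "(1+Q) * H > 0" using HQ pe Qe1 Qe by linarith
  hence Hpos: "H > 0" using assms(1) by (simp add: zero_less_mult_iff)
  have "(1+Q) * (3*H) \<ge> (1+Q) * Q^e"
  proof -
    have "(1+Q) * (3*H) = 3 * ((-1)^e + Q^(e+1))" using HQ by (simp add: algebra_simps)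
    also have "\<dots> \<ge> 3 * Q^(e+1) - 3" using pe by (simp add: ring_distribs)
    finally have "(1+Q)*(3*H) \<ge> 3 * Q^(e+1) - 3" .
    moreover have "(1+Q) * Q^e = Q^e + Q^(e+1)" by (simp add: algebra_simps)
    ultimately show ?thesis using Qe1 Qe by linarith
  qed
  hence b: "3*H \<ge> Q^e" using assms(1) by (simp add: mult_le_cancel_left)
  have G: "G = (-1)^e * H" unfolding H_def by (simp add: power_mult_distrib[symmetric])
  have sg: "sgn G = (-1)^e" using Hpos G by (simp add: sgn_mult)
  have ab: "\<bar>G\<bar> = H" using G Hpos by (simp add: abs_mult)
  show ?thesis using s sg ab b unfolding G_def by simp
qed



definition S :: "nat \<Rightarrow> nat \<Rightarrow> nat \<Rightarrow> int" where
  "S p k m = (\<Sum>d | d dvd m. Legendre (int d) (int p) * int d ^ k)"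

lemma S_mult:
  assumes "prime p" "2 < p" "coprime a b" "a > 0" "b > 0"
  shows "S p k (a*b) = S p k a * S p k b"
proof -
  have "S p k (a*b) = (\<Sum>d1 | d1 dvd a. \<Sum>d2 | d2 dvd b.
          Legendre (int (d1*d2)) (int p) * int (d1*d2) ^ k)"
    unfolding S_def by (rule divsum_mult[OF assms(3-5)])
  also have "\<dots> = (\<Sum>d1 | d1 dvd a. \<Sum>d2 | d2 dvd b.
          (Legendre (int d1) (int p) * int d1 ^ k) * (Legendre (int d2) (int p) * int d2 ^ k))"
    by (simp add: Legendre_mult[OF assms(1,2)] power_mult_distrib algebra_simps)
  also have "\<dots> = S p k a * S p k b"
    unfolding S_def by (simp add: sum_product)
  finally show ?thesis .
qed

lemma S_primepow:
  assumes "prime p" "2 < p" "prime q"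
  shows "S p k (q^e) = (\<Sum>i\<le>e. (Legendre (int q) (int p) * int q ^ k) ^ i)"
proof -
  have set: "{d. d dvd q^e} = (\<lambda>i. q^i) ` {..e}"
    using divides_primepow_nat[OF assms(3)] by auto
  have inj: "inj_on (\<lambda>i. q^i) {..e}"
    using prime_gt_1_nat[OF assms(3)] by (intro inj_onI) simp
  have "S p k (q^e) = (\<Sum>i\<le>e. Legendre (int (q^i)) (int p) * int (q^i) ^ k)"
    unfolding S_def set by (simp add: sum.reindex[OF inj])
  also have "\<dots> = (\<Sum>i\<le>e. (Legendre (int q) (int p) * int q ^ k) ^ i)"
    by (simp add: Legendre_pow[OF assms(1,2)] power_mult_distrib power_mult[symmetric] mult.commute)
  finally show ?thesis .
qed

lemma main_ind:
  assumes p: "prime p" "2 < p" and k: "k \<ge> 1"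
  shows "m \<ge> 1 \<Longrightarrow> \<not> p dvd m \<Longrightarrow> sgn (S p k m) = Legendre (int m) (int p) \<and>
         int m ^ k \<le> 3 ^ card (prime_factors m) * \<bar>S p k m\<bar>"
proof (induction m rule: less_induct)
  case (less m)
  show ?case
  proof (cases "m = 1")
    case True
    have "{d. d dvd (1::nat)} = {1}" by auto
    then show ?thesis using True Legendre_one[OF p(1)] by (simp add: S_def)
  next
    case False
    then obtain q where q: "prime q" "q dvd m" using prime_factor_nat by blast
    define e where "e = multiplicity q m"
    have m0: "m \<noteq> 0" "\<not> is_unit q" using less.prems q(1) by auto
    obtain r where r: "m = q^e * r" "\<not> q dvd r" using multiplicity_decompose'[OF m0] unfolding e_def by blast
    have e1: "e \<ge> 1"
    proof (rule ccontr)
      assume "\<not> e \<ge> 1" then have "e = 0" by simp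
      then show False using r q(2) by simp
    qed
    have q2: "q \<ge> 2" using q prime_ge_2_nat by blast
    have "q^1 \<le> q^e" using power_increasing[OF e1, of q] q2 by simp
    then have qe2: "q^e \<ge> 2" using q2 by simp
    have r0: "r > 0" using r m0 by (cases "r = 0") simp_all
    have rm: "r < m" using r qe2 r0 by (simp add: less_le_trans[of r "2*r"])
    have pr: "\<not> p dvd r" using r less.prems by auto
    have cop: "coprime (q^e) r" using r q by (simp add: prime_imp_coprime)
    have IH: "sgn (S p k r) = Legendre (int r) (int p) \<and>
         int r ^ k \<le> 3 ^ card (prime_factors r) * \<bar>S p k r\<bar>"
      using less.IH[OF rm _ pr] r0 by simp
    have qp: "q \<noteq> p" using q less.prems by auto
    have npq: "\<not> int p dvd int q" using qp q p primes_dvd_imp_eq[of p q]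
      by auto
    define s where "s = Legendre (int q) (int p)"
    have s: "s = 1 \<or> s = -1" using Legendre_vals[of "int q" "int p"] Legendre_zero_iff[of "int q" p] npq
      unfolding s_def by auto
    define Q where "Q = int q ^ k"
    have "q^1 \<le> q^k" using power_increasing[OF k, of q] q2 by simp
    then have "q^k \<ge> 2" using q2 by simp
    then have "int 2 \<le> int (q^k)" by (rule of_nat_mono)
    then have Q2: "Q \<ge> 2" unfolding Q_def by simp
    have G: "sgn (\<Sum>i\<le>e. (s*Q)^i) = s^e \<and> Q^e \<le> 3 * \<bar>\<Sum>i\<le>e. (s*Q)^i\<bar>"
      by (rule geom_bound[OF Q2 s])
    have Sq: "S p k (q^e) = (\<Sum>i\<le>e. (s*Q)^i)"
      unfolding s_def Q_def by (rule S_primepow[OF p q(1)])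
    have Sm: "S p k m = S p k (q^e) * S p k r"
      using S_mult[OF p cop _ r0] q2 unfolding r(1) by simp
    have Lm: "Legendre (int m) (int p) = s^e * Legendre (int r) (int p)"
      unfolding r(1) s_def by (simp only: of_nat_mult of_nat_power Legendre_mult[OF p] Legendre_pow[OF p])
    have pf: "prime_factors m = insert q (prime_factors r)"
      unfolding r(1) using r0 q2 e1
      by (subst prime_factors_product) (simp_all add: prime_factors_power prime_prime_factors q(1))
    have qn: "q \<notin> prime_factors r" using r(2) by auto
    have card: "card (prime_factors m) = Suc (card (prime_factors r))"
      using pf qn by simp
    have sg: "sgn (S p k m) = Legendre (int m) (int p)"
      unfolding Sm sgn_mult Sq Lm using G IH by simp
    have b1: "Q^e \<le> 3 * \<bar>S p k (q^e)\<bar>" using G Sq by simp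
    have b2: "int r ^ k \<le> 3 ^ card (prime_factors r) * \<bar>S p k r\<bar>" using IH by blast
    have "int m = int (q^e) * int r" using r(1) by simp
    then have "int m ^ k = (int q ^ k) ^ e * int r ^ k"
      by (simp only: power_mult_distrib of_nat_power power_mult[symmetric] mult.commute)
    also have "\<dots> = Q^e * int r ^ k" unfolding Q_def by simp
    also have "\<dots> \<le> (3 * \<bar>S p k (q^e)\<bar>) * (3 ^ card (prime_factors r) * \<bar>S p k r\<bar>)"
      by (rule mult_mono[OF b1 b2]) simp_all
    also have "\<dots> = 3 ^ card (prime_factors m) * \<bar>S p k m\<bar>"
      unfolding Sm card abs_mult power_Suc by (simp only: mult.assoc mult.left_commute)
    finally show ?thesis using sg by simp
  qed
qed



lemma sum_reduce:
  assumes "prime p" "\<not> p dvd m" "m \<ge> 1"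
  shows "(\<Sum>d | d dvd p ^ a * m. Legendre (int d) (int p) * int d ^ k) = S p k m"
  unfolding S_def
proof (rule sum.mono_neutral_right)
  show "finite {d. d dvd p ^ a * m}" using assms prime_gt_0_nat[OF assms(1)] by simp
  show "{d. d dvd m} \<subseteq> {d. d dvd p ^ a * m}" by auto
  show "\<forall>i\<in>{d. d dvd p ^ a * m} - {d. d dvd m}. Legendre (int i) (int p) * int i ^ k = 0"
  proof
    fix i assume i: "i \<in> {d. d dvd p ^ a * m} - {d. d dvd m}"
    have "p dvd i"
    proof (rule ccontr)
      assume "\<not> p dvd i"
      then have "coprime p i" by (rule prime_imp_coprime[OF assms(1)])
      then have "coprime i (p^a)" by (simp add: coprime_commute)
      then have "i dvd m" using i coprime_dvd_mult_right_iff by blast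
      then show False using i by simp
    qed
    then have "int p dvd int i" by simp
    then show "Legendre (int i) (int p) * int i ^ k = 0" using Legendre_zero_iff by simp
  qed
qed

lemma omega_bound:
  fixes \<epsilon> :: real
  assumes "\<epsilon> > 0" "m \<ge> 1"
  shows "(3::real) ^ card (prime_factors m) \<le> 3 ^ nat \<lceil>3 powr (1/\<epsilon>)\<rceil> * real m powr \<epsilon>"
proof -
  define B where "B = (3::real) powr (1/\<epsilon>)"
  define N where "N = nat \<lceil>B\<rceil>"
  define P where "P = prime_factors m"
  define Ps where "Ps = {q\<in>P. real q < B}"
  define Pl where "Pl = {q\<in>P. \<not> real q < B}"
  have fP: "finite P" unfolding P_def by simp
  have PU: "P = Ps \<union> Pl" "Ps \<inter> Pl = {}" unfolding Ps_def Pl_def by auto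
  have fs: "finite Ps" "finite Pl" using fP PU by auto
  have cardP: "card P = card Ps + card Pl" using PU fs card_Un_disjoint by metis
  have BN: "B \<le> real N" unfolding N_def by (rule real_nat_ceiling_ge)
  have "Ps \<subseteq> {..<N}"
  proof
    fix q assume "q \<in> Ps"
    then have "real q < real N" using BN unfolding Ps_def by auto
    then show "q \<in> {..<N}" by simp
  qed
  then have "card Ps \<le> N" using card_mono[of "{..<N}" Ps] by simp
  then have s1: "(3::real) ^ card Ps \<le> 3 ^ N" by (rule power_increasing) simp
  have B3: "B powr \<epsilon> = 3" unfolding B_def using assms(1) by (simp add: powr_powr)
  have "(3::real) ^ card Pl = (\<Prod>q\<in>Pl. 3)" by simp
  also have "\<dots> \<le> (\<Prod>q\<in>Pl. real q powr \<epsilon>)"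
  proof (rule prod_mono)
    fix q assume "q \<in> Pl"
    then have "B \<le> real q" unfolding Pl_def by auto
    then have "B powr \<epsilon> \<le> real q powr \<epsilon>"
      using assms(1) unfolding B_def by (intro powr_mono2) auto
    then show "0 \<le> (3::real) \<and> 3 \<le> real q powr \<epsilon>" using B3 by simp
  qed
  also have "\<dots> = (\<Prod>q\<in>Pl. real q) powr \<epsilon>" by (rule prod_powr_distrib[symmetric])
  also have "\<dots> = real (\<Prod>q\<in>Pl. q) powr \<epsilon>" by simp
  also have "\<dots> \<le> real m powr \<epsilon>"
  proof -
    have "(\<Prod>q\<in>Pl. q) \<le> (\<Prod>q\<in>Pl. q ^ multiplicity q m)"
    proof (rule prod_mono)
      fix q assume "q \<in> Pl"
      then have qP: "q \<in> prime_factors m" unfolding Pl_def P_def by auto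
      then have "multiplicity q m \<ge> 1" using prime_factors_multiplicity[of m] by auto
      moreover have "q \<ge> 1" using qP by (metis in_prime_factors_imp_prime prime_ge_1_nat)
      ultimately have "q^1 \<le> q ^ multiplicity q m" by (intro power_increasing)
      then show "0 \<le> q \<and> q \<le> q ^ multiplicity q m" by simp
    qed
    also have "(\<Prod>q\<in>Pl. q ^ multiplicity q m) dvd (\<Prod>q\<in>P. q ^ multiplicity q m)"
      using fP PU by (intro prod_dvd_prod_subset) auto
    then have "(\<Prod>q\<in>Pl. q ^ multiplicity q m) \<le> (\<Prod>q\<in>P. q ^ multiplicity q m)"
      using assms(2) prod_prime_factors[of m] unfolding P_def by (intro dvd_imp_le) auto
    also have "(\<Prod>q\<in>P. q ^ multiplicity q m) = m"
      using assms(2) prod_prime_factors[of m] unfolding P_def by simp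
    finally have "(\<Prod>q\<in>Pl. q) \<le> m" .
    then have le: "real (\<Prod>q\<in>Pl. q) \<le> real m" by (simp only: of_nat_le_iff)
    show ?thesis by (rule powr_mono2) (use assms(1) le in \<open>auto intro: prod_nonneg\<close>)
  qed
  finally have s2: "(3::real) ^ card Pl \<le> real m powr \<epsilon>" .
  have "(3::real) ^ card P = 3 ^ card Ps * 3 ^ card Pl" using cardP by (simp add: power_add)
  also have "\<dots> \<le> 3 ^ N * real m powr \<epsilon>" using s1 s2 by (intro mult_mono) auto
  finally show ?thesis unfolding P_def N_def B_def .
qed

theorem lemma7p1:
  fixes \<epsilon> :: real
  assumes "\<epsilon> > 0"
  shows "\<exists>c::real. c > 0 \<and>
    (\<forall>(p::nat) (k::nat) (a::nat) (m::nat).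
       prime p \<and> odd p \<and> k \<ge> 1 \<and> m \<ge> 1 \<and> \<not> p dvd m \<longrightarrow>
       real_of_int \<bar>\<Sum>d | d dvd p ^ a * m. Legendre (int d) (int p) * int d ^ k\<bar>
          \<ge> c * real m powr (real k - \<epsilon>) \<and>
       sgn (\<Sum>d | d dvd p ^ a * m. Legendre (int d) (int p) * int d ^ k)
          = Legendre (int m) (int p))"
proof -
  define C :: real where "C = 3 ^ nat \<lceil>3 powr (1/\<epsilon>)\<rceil>"
  have C0: "C > 0" unfolding C_def by simp
  show ?thesis
  proof (intro exI[of _ "1/C"] conjI allI impI)
    show "1/C > 0" using C0 by simp
    fix p k a m :: nat
    assume h: "prime p \<and> odd p \<and> k \<ge> 1 \<and> m \<ge> 1 \<and> \<not> p dvd m"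
    then have p: "prime p" and k: "k \<ge> 1" and m: "m \<ge> 1" and pm: "\<not> p dvd m" by auto
    have p2: "2 < p" using h prime_ge_2_nat[OF p] by (cases "p = 2") auto
    have red: "(\<Sum>d | d dvd p ^ a * m. Legendre (int d) (int p) * int d ^ k) = S p k m"
      by (rule sum_reduce[OF p pm m])
    have M: "sgn (S p k m) = Legendre (int m) (int p) \<and>
         int m ^ k \<le> 3 ^ card (prime_factors m) * \<bar>S p k m\<bar>"
      by (rule main_ind[OF p p2 k m pm])
    show "sgn (\<Sum>d | d dvd p ^ a * m. Legendre (int d) (int p) * int d ^ k)
          = Legendre (int m) (int p)" using red M by simp
    have b1: "real m ^ k \<le> 3 ^ card (prime_factors m) * real_of_int \<bar>S p k m\<bar>"
    proof -
      have "real_of_int (int m ^ k) \<le> real_of_int (3 ^ card (prime_factors m) * \<bar>S p k m\<bar>)"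
        using M of_int_le_iff by blast
      then show ?thesis by simp
    qed
    have b2: "(3::real) ^ card (prime_factors m) \<le> C * real m powr \<epsilon>"
      unfolding C_def by (rule omega_bound[OF assms m])
    have mpos: "real m > 0" using m by simp
    have Spos: "real_of_int \<bar>S p k m\<bar> \<ge> 0" by simp
    have "real m ^ k \<le> C * real m powr \<epsilon> * real_of_int \<bar>S p k m\<bar>"
      using b1 mult_right_mono[OF b2 Spos] by linarith
    moreover have "real m powr \<epsilon> * real m powr (real k - \<epsilon>) = real m ^ k"
      using mpos by (simp add: powr_add[symmetric] powr_realpow)
    ultimately have "real m powr \<epsilon> * real m powr (real k - \<epsilon>)
        \<le> real m powr \<epsilon> * (C * real_of_int \<bar>S p k m\<bar>)" by (simp add: ac_simps)
    moreover have "real m powr \<epsilon> > 0" using mpos by simp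
    ultimately have "real m powr (real k - \<epsilon>) \<le> C * real_of_int \<bar>S p k m\<bar>"
      by (simp add: mult_le_cancel_left_pos)
    then have "1 / C * real m powr (real k - \<epsilon>) \<le> real_of_int \<bar>S p k m\<bar>"
      using C0 by (simp add: divide_le_eq mult.commute)
    then show "real_of_int \<bar>\<Sum>d | d dvd p ^ a * m. Legendre (int d) (int p) * int d ^ k\<bar>
          \<ge> 1 / C * real m powr (real k - \<epsilon>)" using red by simp
  qed
qed

end
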